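(* Let $V(x,t)$ admit a saddle (local maximum) at $x^\star(t)$ for all times considered, and let $\hat x^{\det}_t$ be the adiabatic solution of $\varepsilon\dot x=-\partial_xV(x,t)$ tracking $x^\star(t)$ at distance $O(\varepsilon)$. Let $\hat a(t)=-\partial_x^2V(\hat x^{\det}_t,t)$ and assume $\hat a(t)\ge a_0>0$. Consider $dx_t=-\frac1\varepsilon\partial_xV(x_t,t)dt+\frac{\sigma}{\sqrt\varepsilon}g(t)dW_t$ and define $$\mathcal B(h)=\Bigl\{(x,t):|x-\hat x^{\det}_t|<\frac{h\,\sigma\,g(t)}{\sqrt{2\hat a(t)}}\Bigr\}.$$ Assume $g(t)\ge L\varepsilon$ for all $t$, for a sufficiently large constant $L$. Then there are positive constants $C,\kappa$ such that for all $h\le1$, all initial conditions with $(x_0,0)\in\mathcal B(h)$, and all $t>0$, $$\mathbb P^{0,x_0}\{\tau_{\mathcal B(h)}>t\}\le C\exp\Bigl\{-\frac{\kappa}{h^2}\,\frac1\varepsilon\int_0^t\hat a(s)\,ds\Bigr\},$$ where $\tau_{\mathcal B(h)}$ is the first-exit time of $(x_s,s)$ from $\mathcal B(h)$.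
   Context: $W_t$ standard Brownian motion, $\varepsilon,\sigma>0$ small, $V$ and $g$ smooth and bounded as appropriate. *)

theory Defs
  imports "HOL-Probability.Probability"
begin

definition brownian_motion :: "'a measure \<Rightarrow> (real \<Rightarrow> 'a \<Rightarrow> real) \<Rightarrow> bool" where
  "brownian_motion M W \<longleftrightarrow>
     prob_space M \<and>
     (\<forall>t\<ge>0. W t \<in> borel_measurable M) \<and>
     (\<forall>\<omega>\<in>space M. W 0 \<omega> = 0 \<and> continuous_on {0..} (\<lambda>t. W t \<omega>)) \<and>
     (\<forall>s t. 0 \<le> s \<and> s < t \<longrightarrow>
        distributed M lborel (\<lambda>\<omega>. W t \<omega> - W s \<omega>)
          (\<lambda>y. ennreal (normal_density 0 (sqrt (t - s)) y))) \<and>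
     (\<forall>(n::nat) (ts::nat \<Rightarrow> real). (\<forall>i<n. 0 \<le> ts i \<and> ts i < ts (Suc i)) \<longrightarrow>
        prob_space.indep_vars M (\<lambda>_. borel)
          (\<lambda>i \<omega>. W (ts (Suc i)) \<omega> - W (ts i) \<omega>) {..<n})"

text \<open>Wiener integral int_0^t g(s) dW_s of a deterministic C^1 integrand g with
  derivative g', defined pathwise by integration by parts (W 0 = 0).\<close>
definition wiener_integral ::
    "(real \<Rightarrow> real) \<Rightarrow> (real \<Rightarrow> real) \<Rightarrow> (real \<Rightarrow> 'a \<Rightarrow> real) \<Rightarrow> real \<Rightarrow> 'a \<Rightarrow> real" where
  "wiener_integral g g' W t \<omega> = g t * W t \<omega> - integral {0..t} (\<lambda>s. g' s * W s \<omega>)"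

definition sde_solution ::
    "'a measure \<Rightarrow> (real \<Rightarrow> 'a \<Rightarrow> real) \<Rightarrow> (real \<Rightarrow> real \<Rightarrow> real) \<Rightarrow> (real \<Rightarrow> real) \<Rightarrow>
     (real \<Rightarrow> real) \<Rightarrow> real \<Rightarrow> real \<Rightarrow> real \<Rightarrow> (real \<Rightarrow> 'a \<Rightarrow> real) \<Rightarrow> bool" where
  "sde_solution M W Vx g g' \<epsilon> \<sigma> x0 X \<longleftrightarrow>
     (\<forall>t\<ge>0. X t \<in> borel_measurable M) \<and>
     (\<forall>\<omega>\<in>space M. continuous_on {0..} (\<lambda>t. X t \<omega>) \<and>
        (\<forall>t\<ge>0. X t \<omega> = x0 - (1/\<epsilon>) * integral {0..t} (\<lambda>s. Vx (X s \<omega>) s)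
                          + (\<sigma> / sqrt \<epsilon>) * wiener_integral g g' W t \<omega>))"

definition strip_B ::
    "(real \<Rightarrow> real) \<Rightarrow> (real \<Rightarrow> real) \<Rightarrow> (real \<Rightarrow> real) \<Rightarrow> real \<Rightarrow> real \<Rightarrow> (real \<times> real) set" where
  "strip_B xhat ahat g \<sigma> h = {(x, t). \<bar>x - xhat t\<bar> < h * \<sigma> * g t / sqrt (2 * ahat t)}"

text \<open>The event {tau_B > t}: the path (X s, s) has not left B on [0,t].\<close>
definition not_exited_by ::
    "'a measure \<Rightarrow> (real \<Rightarrow> 'a \<Rightarrow> real) \<Rightarrow> (real \<times> real) set \<Rightarrow> real \<Rightarrow> 'a set" where
  "not_exited_by M X B t = {\<omega> \<in> space M. \<forall>s\<in>{0..t}. (X s \<omega>, s) \<in> B}"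

end

theory Submission
  imports Defs
begin


lemma normal_tail:
  fixes X :: "'a \<Rightarrow> real"
  assumes M: "prob_space M"
    and D: "distributed M lborel X (\<lambda>y. ennreal (normal_density 0 sd y))"
    and sd: "sd > 0" and c: "c \<ge> 0"
  shows "measure M ((X -` {y. abs y \<le> c * sd}) \<inter> space M) \<le> 1 - exp (- ((c+1)^2) / 2)/sqrt(2*pi)"
proof -
  interpret prob_space M by fact
  define p0 where "p0 = exp (- ((c+1)^2) / 2)/sqrt(2*pi)"
  define A where "A = {y::real. \<bar>y\<bar> \<le> c * sd}"
  define Bs where "Bs = {c * sd<..(c+1) * sd}"
  have Xm: "X \<in> borel_measurable M" using D by (simp add: distributed_def)
  have Ab: "A \<in> sets lborel" unfolding A_def by measurable
  have Bb: "Bs \<in> sets lborel" unfolding Bs_def by simp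
  have dens: "normal_density 0 sd y \<ge> p0 / sd" if "y \<in> Bs" for y
  proof -
    have y: "c * sd < y" "y \<le> (c+1) * sd" using that by (auto simp: Bs_def)
    have y0: "0 \<le> y" using y(1) c sd by (smt (verit) mult_nonneg_nonneg)
    have "y^2 \<le> ((c+1) * sd)^2" using y y0
      by (intro power_mono) auto
    hence "y^2 \<le> sd^2 * (c+1)^2" by (simp add: power_mult_distrib mult.commute)
    hence "- ((c+1)^2) / 2 \<le> - (y^2) / (2 * sd^2)" using sd by (simp add: field_simps)
    hence e: "exp (- ((c+1)^2) / 2) \<le> exp (- (y^2) / (2 * sd^2))" by simp
    have sq: "sqrt (2 * pi * sd^2) = sd * sqrt(2*pi)" using sd by (simp add: real_sqrt_mult)
    have "p0 / sd = (1/ sqrt(2 * pi * sd^2)) * exp (- ((c+1)^2) / 2)" unfolding p0_def sq by simp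
    also have "\<dots> \<le> (1/ sqrt(2 * pi * sd^2)) * exp (- (y^2) / (2 * sd^2))"
      using e by (intro mult_left_mono) auto
    also have "\<dots> = normal_density 0 sd y" by (simp add: normal_density_def)
    finally show ?thesis .
  qed
  have "(\<integral>\<^sup>+x. ennreal (p0/sd) * indicator Bs x \<partial>lborel) \<le>
        (\<integral>\<^sup>+x. ennreal (normal_density 0 sd x) * indicator Bs x \<partial>lborel)"
    by (intro nn_integral_mono) (auto simp: indicator_def dens ennreal_leI)
  moreover have "(\<integral>\<^sup>+x. ennreal (p0/sd) * indicator Bs x \<partial>lborel) = ennreal p0"
  proof -
    have "(\<integral>\<^sup>+x. ennreal (p0/sd) * indicator Bs x \<partial>lborel) = ennreal (p0/sd) * emeasure lborel Bs"
      using Bb by (simp add: nn_integral_cmult_indicator)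
    also have "emeasure lborel Bs = ennreal sd" using sd c unfolding Bs_def by (simp add: algebra_simps)
    also have "ennreal (p0/sd) * ennreal sd = ennreal p0"
      using sd by (simp add: ennreal_mult'[symmetric] p0_def)
    finally show ?thesis .
  qed
  ultimately have "ennreal p0 \<le> emeasure M (X -` Bs \<inter> space M)"
    using distributed_emeasure[OF D Bb] by simp
  hence PB: "p0 \<le> prob (X -` Bs \<inter> space M)"
    by (simp add: emeasure_eq_measure)
  have disj: "(X -` A \<inter> space M) \<inter> (X -` Bs \<inter> space M) = {}"
    using c sd by (auto simp: A_def Bs_def)
  have evA: "X -` A \<inter> space M \<in> events" using Xm Ab by (simp add: measurable_sets)
  have evB: "X -` Bs \<inter> space M \<in> events" using Xm Bb by (simp add: measurable_sets)
  have "prob (X -` A \<inter> space M) + prob (X -` Bs \<inter> space M) = prob ((X -` A \<inter> space M) \<union> (X -` Bs \<inter> space M))"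
    using disj evA evB by (simp add: finite_measure_Union)
  also have "\<dots> \<le> 1" by simp
  finally show ?thesis using PB unfolding A_def p0_def by simp
qed


lemma det_B:
  fixes B g g' :: "real \<Rightarrow> real"
  assumes ab: "a \<le> b" and Bc: "continuous_on {a..b} B" and g'c: "continuous_on {a..b} g'"
    and g'b: "\<forall>r\<in>{a..b}. \<bar>g' r\<bar> \<le> G1" and gpos: "\<forall>s\<in>{a..b}. g s > 0"
    and small: "\<forall>s\<in>{a..b}. G1 * (b - a) \<le> g s / 2"
    and N: "\<forall>s\<in>{a..b}. \<bar>g s * B s - integral {a..s} (\<lambda>r. g' r * B r)\<bar> \<le> T * g s"
  shows "\<bar>B b\<bar> \<le> 2 * T"
proof -
  have "continuous_on {a..b} (\<lambda>x. \<bar>B x\<bar>)" using Bc by (intro continuous_intros)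
  then obtain s where s: "s \<in> {a..b}" and smax: "\<And>x. x \<in> {a..b} \<Longrightarrow> \<bar>B x\<bar> \<le> \<bar>B s\<bar>"
    using continuous_attains_sup[of "{a..b}" "\<lambda>x. \<bar>B x\<bar>"] ab by auto
  define m where "m = \<bar>B s\<bar>"
  have G0: "0 \<le> G1" using g'b ab by (meson abs_ge_zero atLeastAtMost_iff order.trans order_refl)
  have sub: "{a..s} \<subseteq> {a..b}" using s by auto
  have cont: "continuous_on {a..s} (\<lambda>r. g' r * B r)"
    using continuous_on_subset[OF Bc sub] continuous_on_subset[OF g'c sub] by (intro continuous_intros)
  have "norm (integral {a..s} (\<lambda>r. g' r * B r)) \<le> (G1 * m) * (s - a)"
  proof (rule integral_bound)
    show "a \<le> s" using s by auto
    show "continuous_on {a..s} (\<lambda>r. g' r * B r)" by fact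
    fix r assume r: "r \<in> {a..s}"
    hence rb: "r \<in> {a..b}" using sub by auto
    have "norm (g' r * B r) = \<bar>g' r\<bar> * \<bar>B r\<bar>" by (simp add: abs_mult)
    also have "\<dots> \<le> G1 * m" using g'b rb smax[OF rb] unfolding m_def
      by (intro mult_mono) auto
    finally show "norm (g' r * B r) \<le> G1 * m" .
  qed
  also have "\<dots> \<le> (G1 * m) * (b - a)" using s G0 unfolding m_def
    by (intro mult_left_mono) auto
  finally have I: "\<bar>integral {a..s} (\<lambda>r. g' r * B r)\<bar> \<le> G1 * (b - a) * m" by (simp add: mult_ac)
  have gs: "g s > 0" using gpos s by auto
  have "g s * m = \<bar>g s * B s\<bar>" using gs unfolding m_def by (simp add: abs_mult)
  also have "\<dots> \<le> T * g s + G1 * (b - a) * m" using N s I by (smt (verit))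
  also have "\<dots> \<le> T * g s + (g s / 2) * m" using small s unfolding m_def
    by (intro add_left_mono mult_right_mono) auto
  finally have "g s * m \<le> T * g s + (g s / 2) * m" .
  hence "m \<le> 2 * T" using gpos s by (smt (verit) mult_le_cancel_left_pos field_sum_of_halves mult.commute distrib_left)
  thus ?thesis using smax[of b] ab unfolding m_def by auto
qed


lemma lip_from_deriv:
  fixes f f' :: "real \<Rightarrow> real"
  assumes d: "\<And>x. (f has_real_derivative f' x) (at x)" and b: "\<And>x. \<bar>f' x\<bar> \<le> M"
  shows "\<bar>f p - f q\<bar> \<le> M * \<bar>p - q\<bar>"
proof -
  have *: "\<bar>f v - f u\<bar> \<le> M * \<bar>v - u\<bar>" if uv: "u < v" for u v
  proof -
    obtain z where "f v - f u = (v - u) * f' z" using MVT2[OF uv, of f f'] d by blast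
    hence "\<bar>f v - f u\<bar> = \<bar>v - u\<bar> * \<bar>f' z\<bar>" by (simp add: abs_mult)
    also have "\<dots> \<le> \<bar>v - u\<bar> * M" using b by (intro mult_left_mono) auto
    finally show ?thesis by (simp add: mult.commute)
  qed
  show ?thesis
    using *[of p q] *[of q p] by (cases p q rule: linorder_cases) (auto simp: abs_minus_commute)
qed

lemma cont_comp2:
  fixes V :: "real \<Rightarrow> real \<Rightarrow> real"
  assumes c: "continuous_on UNIV (\<lambda>(x, t). V x t)" and f: "continuous_on S f"
  shows "continuous_on S (\<lambda>u. V (f u) u)"
proof -
  have "continuous_on S (\<lambda>u. (\<lambda>(x, t). V x t) (f u, u))"
    by (rule continuous_on_compose2[OF c _ subset_UNIV]) (intro continuous_intros f)
  thus ?thesis by simp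
qed

lemma path_bound:
  fixes x w xh g g' :: "real \<Rightarrow> real" and Vx Vxx :: "real \<Rightarrow> real \<Rightarrow> real"
  assumes dVxx: "\<And>x t. ((\<lambda>y. Vx y t) has_real_derivative Vxx x t) (at x)"
    and contVx: "continuous_on UNIV (\<lambda>(x, t). Vx x t)"
    and Mb: "\<And>x t. \<bar>Vxx x t\<bar> \<le> Mxx"
    and dg: "\<And>t. (g has_real_derivative g' t) (at t)" and contg': "continuous_on UNIV g'"
    and xc: "continuous_on {0..} x" and wc: "continuous_on {0..} w"
    and xeq: "\<And>r. r \<ge> 0 \<Longrightarrow> x r = x0 - (1/\<epsilon>) * integral {0..r} (\<lambda>u. Vx (x u) u)
                 + (\<sigma> / sqrt \<epsilon>) * (g r * w r - integral {0..r} (\<lambda>u. g' u * w u))"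
    and dxh: "\<And>r. r \<ge> 0 \<Longrightarrow> (xh has_real_derivative (- (1/\<epsilon>) * Vx (xh r) r)) (at r within {0..})"
    and eps: "\<epsilon> > 0" and sig: "\<sigma> > 0" and a0: "0 \<le> a" and as: "a \<le> s"
    and Yb: "\<And>r. r \<in> {a..s} \<Longrightarrow> \<bar>x r - xh r\<bar> \<le> Yb"
  shows "\<bar>g s * (w s - w a) - integral {a..s} (\<lambda>r. g' r * (w r - w a))\<bar>
          \<le> (sqrt \<epsilon> / \<sigma>) * (2 * Yb + (s - a) * Mxx * Yb / \<epsilon>)"
proof -
  define F where "F u = Vx (x u) u" for u
  define G where "G u = g' u * w u" for u
  define H where "H u = Vx (xh u) u" for u
  have sub0: "{0..s} \<subseteq> {0..}" "{a..s} \<subseteq> {0..}" using a0 by auto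
  have xhc: "continuous_on {0..} xh" by (rule DERIV_continuous_on[OF dxh]) auto
  have Fc: "continuous_on {0..s} F" unfolding F_def
    by (rule cont_comp2[OF contVx continuous_on_subset[OF xc sub0(1)]])
  have Gc: "continuous_on {0..s} G" unfolding G_def
    using continuous_on_subset[OF wc sub0(1)] continuous_on_subset[OF contg', of "{0..s}"]
    by (intro continuous_intros) auto
  have Hc: "continuous_on {a..s} H" unfolding H_def
    by (rule cont_comp2[OF contVx continuous_on_subset[OF xhc sub0(2)]])
  have Fi: "F integrable_on {0..s}" by (rule integrable_continuous_interval[OF Fc])
  have Gi: "G integrable_on {0..s}" by (rule integrable_continuous_interval[OF Gc])
  have Hi: "H integrable_on {a..s}" by (rule integrable_continuous_interval[OF Hc])
  have Fi2: "F integrable_on {a..s}" using Fi by (rule integrable_on_subinterval) (use a0 in auto)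
  have Gi2: "G integrable_on {a..s}" using Gi by (rule integrable_on_subinterval) (use a0 in auto)
  have IF: "integral {0..s} F = integral {0..a} F + integral {a..s} F"
    using Henstock_Kurzweil_Integration.integral_combine[OF a0 as Fi] by simp
  have IG: "integral {0..s} G = integral {0..a} G + integral {a..s} G"
    using Henstock_Kurzweil_Integration.integral_combine[OF a0 as Gi] by simp
  have g'i: "(g' has_integral (g s - g a)) {a..s}"
    using as dg by (intro fundamental_theorem_of_calculus)
      (auto simp: has_real_derivative_iff_has_vector_derivative[symmetric] intro: DERIV_subset)
  have H_int: "(H has_integral (- \<epsilon>) * (xh s - xh a)) {a..s}"
  proof -
    have "((\<lambda>u. - (1/\<epsilon>) * H u) has_integral (xh s - xh a)) {a..s}"
      unfolding H_def using as a0
      by (intro fundamental_theorem_of_calculus)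
        (auto simp: has_real_derivative_iff_has_vector_derivative[symmetric]
              intro!: DERIV_subset[OF dxh[simplified]])
    from has_integral_mult_right[OF this, of "- \<epsilon>"] show ?thesis using eps by simp
  qed
  have IH: "integral {a..s} H = - \<epsilon> * (xh s - xh a)" using H_int by (rule integral_unique)
  define N where "N = g s * (w s - w a) - integral {a..s} (\<lambda>r. g' r * (w r - w a))"
  have "integral {a..s} (\<lambda>r. g' r * (w r - w a)) = integral {a..s} (\<lambda>r. G r - w a * g' r)"
    by (simp add: G_def algebra_simps)
  also have "\<dots> = integral {a..s} G - w a * (g s - g a)"
  proof -
    have hi: "((\<lambda>r. w a * g' r) has_integral w a * (g s - g a)) {a..s}"
      by (rule has_integral_mult_right[OF g'i])
    show ?thesis
      using Henstock_Kurzweil_Integration.integral_diff[OF Gi2 has_integral_integrable[OF hi]]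
        integral_unique[OF hi] by simp
  qed
  finally have Neq: "N = (g s * w s - integral {0..s} G) - (g a * w a - integral {0..a} G)"
    unfolding N_def IG by (simp add: algebra_simps)
  have xs: "x s = x0 - (1/\<epsilon>) * integral {0..s} F + (\<sigma> / sqrt \<epsilon>) * (g s * w s - integral {0..s} G)"
    using xeq[of s] a0 as unfolding F_def G_def by simp
  have xa: "x a = x0 - (1/\<epsilon>) * integral {0..a} F + (\<sigma> / sqrt \<epsilon>) * (g a * w a - integral {0..a} G)"
    using xeq[of a] a0 unfolding F_def G_def by simp
  have key: "(\<sigma> / sqrt \<epsilon>) * N = (x s - xh s) - (x a - xh a) + (1/\<epsilon>) * integral {a..s} (\<lambda>u. F u - H u)"
    using eps
    by (simp add: Neq xs xa IF Henstock_Kurzweil_Integration.integral_diff[OF Fi2 Hi] IH algebra_simps)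
  have Db: "\<bar>integral {a..s} (\<lambda>u. F u - H u)\<bar> \<le> (Mxx * Yb) * (s - a)"
  proof -
    have "norm (integral {a..s} (\<lambda>u. F u - H u)) \<le> (Mxx * Yb) * (s - a)"
    proof (rule integral_bound[OF as])
      show "continuous_on {a..s} (\<lambda>u. F u - H u)"
        using continuous_on_subset[OF Fc, of "{a..s}"] Hc a0 by (intro continuous_intros) auto
      fix u assume u: "u \<in> {a..s}"
      have "\<bar>F u - H u\<bar> \<le> Mxx * \<bar>x u - xh u\<bar>" unfolding F_def H_def
        by (rule lip_from_deriv[OF dVxx Mb])
      also have "\<dots> \<le> Mxx * Yb" using Yb[OF u] Mb[of 0 0]
        by (intro mult_left_mono) auto
      finally show "norm (F u - H u) \<le> Mxx * Yb" by simp
    qed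
    thus ?thesis by simp
  qed
  have "\<bar>(\<sigma> / sqrt \<epsilon>) * N\<bar> \<le> Yb + Yb + (1/\<epsilon>) * ((Mxx * Yb) * (s - a))"
  proof -
    have "\<bar>(1/\<epsilon>) * integral {a..s} (\<lambda>u. F u - H u)\<bar> \<le> (1/\<epsilon>) * ((Mxx * Yb) * (s - a))"
      using Db eps by (simp add: abs_mult divide_right_mono)
    thus ?thesis unfolding key using Yb[of s] Yb[of a] as by (smt (verit) atLeastAtMost_iff)
  qed
  moreover have "\<bar>(\<sigma> / sqrt \<epsilon>) * N\<bar> = (\<sigma> / sqrt \<epsilon>) * \<bar>N\<bar>"
    using sig eps by (simp add: abs_mult)
  moreover have "(1/\<epsilon>) * ((Mxx * Yb) * (s - a)) = (s - a) * Mxx * Yb / \<epsilon>" by simp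
  ultimately have "(\<sigma> / sqrt \<epsilon>) * \<bar>N\<bar> \<le> 2 * Yb + (s - a) * Mxx * Yb / \<epsilon>"
    by (smt (verit))
  hence "\<bar>N\<bar> \<le> (sqrt \<epsilon> / \<sigma>) * (2 * Yb + (s - a) * Mxx * Yb / \<epsilon>)"
    using sig eps by (simp add: field_simps)
  thus ?thesis unfolding N_def .
qed


lemma interval_incr:
  fixes x w xh g g' ahat :: "real \<Rightarrow> real" and Vx Vxx :: "real \<Rightarrow> real \<Rightarrow> real"
  assumes dVxx: "\<And>x t. ((\<lambda>y. Vx y t) has_real_derivative Vxx x t) (at x)"
    and contVx: "continuous_on UNIV (\<lambda>(x, t). Vx x t)"
    and Mb: "\<And>x t. \<bar>Vxx x t\<bar> \<le> Mxx"
    and dg: "\<And>t. (g has_real_derivative g' t) (at t)" and contg': "continuous_on UNIV g'"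
    and G1: "\<And>t. \<bar>g' t\<bar> \<le> G1" and gL: "\<And>t. g t \<ge> 2 * G1 * \<epsilon>" and gpos: "\<And>t. g t > 0"
    and xc: "continuous_on {0..} x" and wc: "continuous_on {0..} w"
    and xeq: "\<And>r. r \<ge> 0 \<Longrightarrow> x r = x0 - (1/\<epsilon>) * integral {0..r} (\<lambda>u. Vx (x u) u)
                 + (\<sigma> / sqrt \<epsilon>) * (g r * w r - integral {0..r} (\<lambda>u. g' u * w u))"
    and dxh: "\<And>r. r \<ge> 0 \<Longrightarrow> (xh has_real_derivative (- (1/\<epsilon>) * Vx (xh r) r)) (at r within {0..})"
    and eps: "\<epsilon> > 0" and sig: "\<sigma> > 0" and a0: "0 \<le> a" and ab: "a \<le> b"
    and h: "0 < h" "h \<le> 1" and ba: "b - a \<le> h^2 * \<epsilon>"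
    and A0: "A0 > 0" and ahat: "\<And>r. r \<in> {a..b} \<Longrightarrow> ahat r \<ge> A0"
    and strip: "\<And>r. r \<in> {a..b} \<Longrightarrow> \<bar>x r - xh r\<bar> < h * \<sigma> * g r / sqrt (2 * ahat r)"
  shows "\<bar>w b - w a\<bar> \<le> (3 * (2 + Mxx) / sqrt (2 * A0)) * (h * sqrt \<epsilon>)"
proof -
  define K where "K = 3 * (2 + Mxx) / sqrt (2 * A0)"
  define T where "T = K * (h * sqrt \<epsilon>) / 2"
  have G0: "0 \<le> G1" using G1[of 0] by linarith
  have M0: "0 \<le> Mxx" using Mb[of 0 0] by linarith
  have h2: "h^2 \<le> 1" using h by (simp add: power_le_one)
  have baeps: "b - a \<le> \<epsilon>" using ba h2 eps by (smt (verit) mult_right_mono mult_left_le_one_le)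
  have small: "G1 * (b - a) \<le> g s / 2" for s
  proof -
    have "G1 * (b - a) \<le> G1 * \<epsilon>" using baeps G0 by (rule mult_left_mono)
    thus ?thesis using gL[of s] by linarith
  qed
  have gcomp: "g r \<le> 3/2 * g s" if "r \<in> {a..b}" "s \<in> {a..b}" for r s
  proof -
    have "\<bar>g r - g s\<bar> \<le> G1 * \<bar>r - s\<bar>" by (rule lip_from_deriv[OF dg G1])
    also have "\<dots> \<le> G1 * (b - a)" using that G0 by (intro mult_left_mono) auto
    finally show ?thesis using small[of s] by linarith
  qed
  have sq: "sqrt (2 * A0) > 0" using A0 by simp
  have N: "\<forall>s\<in>{a..b}. \<bar>g s * (w s - w a) - integral {a..s} (\<lambda>r. g' r * (w r - w a))\<bar> \<le> T * g s"
  proof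
    fix s assume s: "s \<in> {a..b}"
    define Yb where "Yb = 3/2 * h * \<sigma> * g s / sqrt (2 * A0)"
    have Yb0: "0 \<le> Yb" unfolding Yb_def using h sig gpos[of s] A0 by simp
    have Ybr: "\<bar>x r - xh r\<bar> \<le> Yb" if r: "r \<in> {a..s}" for r
    proof -
      have rb: "r \<in> {a..b}" using r s by auto
      have "\<bar>x r - xh r\<bar> \<le> h * \<sigma> * g r / sqrt (2 * ahat r)" using strip[OF rb] by simp
      also have "\<dots> \<le> h * \<sigma> * g r / sqrt (2 * A0)"
        using ahat[OF rb] A0 h sig gpos[of r]
        by (intro divide_left_mono) (auto intro!: mult_pos_pos)
      also have "\<dots> \<le> h * \<sigma> * (3/2 * g s) / sqrt (2 * A0)"
        using gcomp[OF rb s] h sig A0 by (intro divide_right_mono mult_left_mono) auto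
      finally show ?thesis unfolding Yb_def by simp
    qed
    have "\<bar>g s * (w s - w a) - integral {a..s} (\<lambda>r. g' r * (w r - w a))\<bar>
          \<le> (sqrt \<epsilon> / \<sigma>) * (2 * Yb + (s - a) * Mxx * Yb / \<epsilon>)"
      using s by (intro path_bound[OF dVxx contVx Mb dg contg' xc wc xeq dxh eps sig a0 _ Ybr]) auto
    also have "\<dots> \<le> (sqrt \<epsilon> / \<sigma>) * (2 * Yb + Mxx * Yb)"
    proof -
      have "(s - a) * (Mxx * Yb) \<le> \<epsilon> * (Mxx * Yb)"
        using s baeps M0 Yb0 by (intro mult_right_mono) auto
      hence "(s - a) * Mxx * Yb / \<epsilon> \<le> Mxx * Yb" using eps by (simp add: field_simps)
      thus ?thesis using sig eps by (intro mult_left_mono) auto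
    qed
    also have "\<dots> = T * g s" unfolding T_def K_def Yb_def using sig eps sq
      by (simp add: field_simps)
    finally show "\<bar>g s * (w s - w a) - integral {a..s} (\<lambda>r. g' r * (w r - w a))\<bar> \<le> T * g s" .
  qed
  have "\<bar>w b - w a\<bar> \<le> 2 * T"
  proof (rule det_B[OF ab, where g = g and g' = g'])
    show "continuous_on {a..b} (\<lambda>r. w r - w a)"
      using continuous_on_subset[OF wc, of "{a..b}"] a0 by (intro continuous_intros) auto
    show "continuous_on {a..b} g'" using continuous_on_subset[OF contg'] by blast
  qed (use G1 gpos small N in auto)
  thus ?thesis unfolding T_def K_def by simp
qed

theorem theorem2p5:
  fixes V Vx Vxx Vxxx Vt :: "real \<Rightarrow> real \<Rightarrow> real"
    and xstar g g' :: "real \<Rightarrow> real"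
    and xhat :: "real \<Rightarrow> real \<Rightarrow> real"
    and \<epsilon>0 a0 :: real
  assumes dVx: "\<And>x t. ((\<lambda>y. V y t) has_real_derivative Vx x t) (at x)"
      and dVxx: "\<And>x t. ((\<lambda>y. Vx y t) has_real_derivative Vxx x t) (at x)"
      and dVxxx: "\<And>x t. ((\<lambda>y. Vxx y t) has_real_derivative Vxxx x t) (at x)"
      and dVt: "\<And>x t. ((\<lambda>s. V x s) has_real_derivative Vt x t) (at t)"
      and contV: "continuous_on UNIV (\<lambda>(x, t). Vx x t)"
                 "continuous_on UNIV (\<lambda>(x, t). Vxx x t)"
                 "continuous_on UNIV (\<lambda>(x, t). Vxxx x t)"
                 "continuous_on UNIV (\<lambda>(x, t). Vt x t)"
      and bddV: "bounded (range (\<lambda>(x, t). Vxx x t))"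
                "bounded (range (\<lambda>(x, t). Vxxx x t))"
      and saddle: "\<And>t. t \<ge> 0 \<Longrightarrow> Vx (xstar t) t = 0 \<and> Vxx (xstar t) t < 0"
      and dg: "\<And>t. (g has_real_derivative g' t) (at t)"
      and contg': "continuous_on UNIV g'"
      and bddg: "bounded (range g)" "bounded (range g')"
      and \<epsilon>0_pos: "\<epsilon>0 > 0"
      and adiabatic: "\<And>\<epsilon> t. 0 < \<epsilon> \<Longrightarrow> \<epsilon> \<le> \<epsilon>0 \<Longrightarrow> t \<ge> 0 \<Longrightarrow>
             (xhat \<epsilon> has_real_derivative (- (1/\<epsilon>) * Vx (xhat \<epsilon> t) t)) (at t within {0..})"
      and tracking: "\<exists>K. \<forall>\<epsilon> t. 0 < \<epsilon> \<and> \<epsilon> \<le> \<epsilon>0 \<and> t \<ge> 0 \<longrightarrow> \<bar>xhat \<epsilon> t - xstar t\<bar> \<le> K * \<epsilon>"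
      and a0_pos: "a0 > 0"
      and ahat_lower: "\<And>\<epsilon> t. 0 < \<epsilon> \<Longrightarrow> \<epsilon> \<le> \<epsilon>0 \<Longrightarrow> t \<ge> 0 \<Longrightarrow> - Vxx (xhat \<epsilon> t) t \<ge> a0"
  shows "\<exists>L C \<kappa> \<epsilon>1 \<sigma>1. L > 0 \<and> C > 0 \<and> \<kappa> > 0 \<and> 0 < \<epsilon>1 \<and> \<epsilon>1 \<le> \<epsilon>0 \<and> \<sigma>1 > 0 \<and>
    (\<forall>\<epsilon> \<sigma>. 0 < \<epsilon> \<and> \<epsilon> < \<epsilon>1 \<and> 0 < \<sigma> \<and> \<sigma> < \<sigma>1 \<and> (\<forall>t. g t \<ge> L * \<epsilon>) \<longrightarrow>
      (\<forall>(M :: 'a measure) W X x0 h t.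
         brownian_motion M W \<and> sde_solution M W Vx g g' \<epsilon> \<sigma> x0 X \<and>
         0 < h \<and> h \<le> 1 \<and> t > 0 \<and>
         (x0, 0) \<in> strip_B (xhat \<epsilon>) (\<lambda>s. - Vxx (xhat \<epsilon> s) s) g \<sigma> h \<longrightarrow>
         measure M (not_exited_by M X (strip_B (xhat \<epsilon>) (\<lambda>s. - Vxx (xhat \<epsilon> s) s) g \<sigma> h) t)
           \<le> C * exp (- (\<kappa> / h\<^sup>2) * (1/\<epsilon>) * integral {0..t} (\<lambda>s. - Vxx (xhat \<epsilon> s) s))))"
proof -
  obtain Mxx where Mpos: "Mxx > 0" and Mb: "\<And>x t. \<bar>Vxx x t\<bar> \<le> Mxx"
  proof -
    obtain b where "b > 0" "\<forall>z\<in>range (\<lambda>(x, t). Vxx x t). norm z \<le> b"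
      using bddV(1) unfolding bounded_pos by blast
    hence "\<bar>Vxx x t\<bar> \<le> b" for x t by (metis (no_types, lifting) case_prod_conv rangeI real_norm_def)
    thus ?thesis using that \<open>b > 0\<close> by blast
  qed
  obtain G1 where G1pos: "G1 > 0" and G1: "\<And>t. \<bar>g' t\<bar> \<le> G1"
  proof -
    obtain b where "b > 0" "\<forall>z\<in>range g'. norm z \<le> b"
      using bddg(2) unfolding bounded_pos by blast
    thus ?thesis using that by auto
  qed
  define K where "K = 3 * (2 + Mxx) / sqrt (2 * a0)"
  define p0 where "p0 = exp (- ((K+1)^2) / 2) / sqrt (2 * pi)"
  define L where "L = 2 * G1"
  define \<kappa> where "\<kappa> = p0 / Mxx"
  have K0: "K \<ge> 0" unfolding K_def using Mpos a0_pos by simp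
  have p0pos: "p0 > 0" unfolding p0_def by simp
  have p0le: "p0 \<le> 1"
  proof -
    have "exp (- ((K+1)^2) / 2) \<le> 1" by simp
    hence "exp (- ((K+1)^2) / 2) \<le> sqrt (2 * pi)" using pi_gt3 by (smt (verit) real_sqrt_ge_1_iff)
    moreover have "0 < sqrt (2 * pi)" by simp
    ultimately show ?thesis unfolding p0_def by (simp only: divide_le_eq_1) simp
  qed
  have main: "measure M (not_exited_by M X (strip_B (xhat \<epsilon>) (\<lambda>s. - Vxx (xhat \<epsilon> s) s) g \<sigma> h) t)
           \<le> exp 1 * exp (- (\<kappa> / h\<^sup>2) * (1/\<epsilon>) * integral {0..t} (\<lambda>s. - Vxx (xhat \<epsilon> s) s))"
    if eps: "0 < \<epsilon>" "\<epsilon> < \<epsilon>0" and sig: "0 < \<sigma>" and gL: "\<forall>t. g t \<ge> L * \<epsilon>"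
      and BM: "brownian_motion M W" and SDE: "sde_solution M W Vx g g' \<epsilon> \<sigma> x0 X"
      and h: "0 < h" "h \<le> 1" and t: "t > 0"
    for \<epsilon> \<sigma> and M :: "'a measure" and W X x0 h t
  proof -
    interpret prob_space M using BM unfolding brownian_motion_def by blast
    define \<Delta> where "\<Delta> = h^2 * \<epsilon>"
    define sd where "sd = h * sqrt \<epsilon>"
    have \<Delta>pos: "\<Delta> > 0" unfolding \<Delta>_def using h eps by simp
    have sqD: "sqrt \<Delta> = sd" unfolding \<Delta>_def sd_def using h eps by (simp add: real_sqrt_mult)
    have sdpos: "sd > 0" unfolding sd_def using h eps by simp
    define n where "n = nat \<lfloor>t / \<Delta>\<rfloor>"
    define ts where "ts i = real i * \<Delta>" for i :: nat
    define Inc where "Inc i \<omega> = W (ts (Suc i)) \<omega> - W (ts i) \<omega>" for i \<omega>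
    define A where "A i = Inc i -` {y. abs y \<le> K * sd} \<inter> space M" for i
    have nle: "real n * \<Delta> \<le> t"
    proof -
      have "real n \<le> t / \<Delta>" unfolding n_def using t \<Delta>pos by simp
      thus ?thesis using \<Delta>pos by (simp add: field_simps)
    qed
    have ngt: "real n > t / \<Delta> - 1" unfolding n_def using t \<Delta>pos by simp
    have gpos: "\<And>t. g t > 0" using gL eps G1pos unfolding L_def by (smt (verit) mult_pos_pos)
    have eps0: "\<epsilon> \<le> \<epsilon>0" using eps by simp
    have incl: "not_exited_by M X (strip_B (xhat \<epsilon>) (\<lambda>s. - Vxx (xhat \<epsilon> s) s) g \<sigma> h) t
                \<subseteq> space M \<inter> (\<Inter>i\<in>{..<n}. A i)"
    proof
      fix \<omega> assume \<omega>: "\<omega> \<in> not_exited_by M X (strip_B (xhat \<epsilon>) (\<lambda>s. - Vxx (xhat \<epsilon> s) s) g \<sigma> h) t"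
      hence \<omega>s: "\<omega> \<in> space M" and
        st: "\<And>s. s \<in> {0..t} \<Longrightarrow> \<bar>X s \<omega> - xhat \<epsilon> s\<bar> < h * \<sigma> * g s / sqrt (2 * (- Vxx (xhat \<epsilon> s) s))"
        unfolding not_exited_by_def strip_B_def by auto
      have wc: "continuous_on {0..} (\<lambda>r. W r \<omega>)" using BM \<omega>s unfolding brownian_motion_def by blast
      have xc: "continuous_on {0..} (\<lambda>r. X r \<omega>)" using SDE \<omega>s unfolding sde_solution_def by blast
      have xeq: "\<And>r. r \<ge> 0 \<Longrightarrow> X r \<omega> = x0 - (1/\<epsilon>) * integral {0..r} (\<lambda>u. Vx (X u \<omega>) u)
                 + (\<sigma> / sqrt \<epsilon>) * (g r * W r \<omega> - integral {0..r} (\<lambda>u. g' u * W u \<omega>))"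
        using SDE \<omega>s unfolding sde_solution_def wiener_integral_def by blast
      have "\<omega> \<in> A i" if i: "i < n" for i
      proof -
        have tsi: "0 \<le> ts i" unfolding ts_def using \<Delta>pos by simp
        have tsle: "ts i \<le> ts (Suc i)" unfolding ts_def using \<Delta>pos by (simp add: field_simps)
        have tsd: "ts (Suc i) - ts i = \<Delta>" unfolding ts_def by (simp add: field_simps)
        have tst: "ts (Suc i) \<le> t"
        proof -
          have "ts (Suc i) \<le> real n * \<Delta>" unfolding ts_def using i \<Delta>pos
            by (intro mult_right_mono) auto
          thus ?thesis using nle by simp
        qed
        have "\<bar>W (ts (Suc i)) \<omega> - W (ts i) \<omega>\<bar> \<le> (3 * (2 + Mxx) / sqrt (2 * a0)) * (h * sqrt \<epsilon>)"
        proof (rule interval_incr[where ahat = "\<lambda>s. - Vxx (xhat \<epsilon> s) s",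
                 OF dVxx contV(1) Mb dg contg' G1 _ gpos xc wc xeq _ eps(1) sig tsi tsle h _ a0_pos])
          show "\<And>t. 2 * G1 * \<epsilon> \<le> g t" using gL unfolding L_def by auto
          show "\<And>r. 0 \<le> r \<Longrightarrow> (xhat \<epsilon> has_real_derivative - (1 / \<epsilon>) * Vx (xhat \<epsilon> r) r) (at r within {0..})"
            using adiabatic eps0 eps by blast
          show "ts (Suc i) - ts i \<le> h\<^sup>2 * \<epsilon>" using tsd unfolding \<Delta>_def by simp
          show "\<And>r. r \<in> {ts i..ts (Suc i)} \<Longrightarrow> a0 \<le> - Vxx (xhat \<epsilon> r) r"
            using ahat_lower eps0 eps tsi by auto
          show "\<And>r. r \<in> {ts i..ts (Suc i)} \<Longrightarrow> \<bar>X r \<omega> - xhat \<epsilon> r\<bar> < h * \<sigma> * g r / sqrt (2 * - Vxx (xhat \<epsilon> r) r)"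
            using st tsi tst by auto
        qed
        thus ?thesis unfolding A_def Inc_def K_def sd_def using \<omega>s by simp
      qed
      thus "\<omega> \<in> space M \<inter> (\<Inter>i\<in>{..<n}. A i)" using \<omega>s by auto
    qed
    have Ameas: "A i \<in> events" for i
    proof -
      have "Inc i \<in> borel_measurable M" unfolding Inc_def ts_def
        using BM \<Delta>pos unfolding brownian_motion_def by (intro borel_measurable_diff) auto
      moreover have "{y::real. abs y \<le> K * sd} \<in> sets borel" by measurable
      ultimately show ?thesis unfolding A_def by (rule measurable_sets)
    qed
    have Aprob: "prob (A i) \<le> 1 - p0" for i
    proof -
      have dd: "\<forall>s t. 0 \<le> s \<and> s < t \<longrightarrow>
        distributed M lborel (\<lambda>\<omega>. W t \<omega> - W s \<omega>)
          (\<lambda>y. ennreal (normal_density 0 (sqrt (t - s)) y))"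
        using BM unfolding brownian_motion_def by blast
      have c1: "0 \<le> ts i \<and> ts i < ts (Suc i)" unfolding ts_def using \<Delta>pos by (simp add: field_simps)
      have tsd: "ts (Suc i) - ts i = \<Delta>" unfolding ts_def by (simp add: field_simps)
      have "distributed M lborel (Inc i) (\<lambda>y. ennreal (normal_density 0 (sqrt (ts (Suc i) - ts i)) y))"
        using dd c1 unfolding Inc_def by blast
      hence "distributed M lborel (Inc i) (\<lambda>y. ennreal (normal_density 0 sd y))"
        by (simp only: tsd sqD)
      from normal_tail[OF prob_space_axioms this sdpos K0]
      show ?thesis unfolding A_def p0_def by simp
    qed
    have S_meas: "space M \<inter> (\<Inter>i\<in>{..<n}. A i) \<in> events"
    proof (cases "n = 0")
      case True thus ?thesis by simp
    next
      case False
      hence "space M \<inter> (\<Inter>i\<in>{..<n}. A i) = (\<Inter>i\<in>{..<n}. A i)" unfolding A_def by auto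
      moreover have "(\<Inter>i\<in>{..<n}. A i) \<in> events" using False Ameas
        by (intro sets.finite_INT) auto
      ultimately show ?thesis by simp
    qed
    have S_prob: "prob (space M \<inter> (\<Inter>i\<in>{..<n}. A i)) \<le> (1 - p0) ^ n"
    proof (cases "n = 0")
      case True thus ?thesis by simp
    next
      case False
      hence eq: "space M \<inter> (\<Inter>i\<in>{..<n}. A i) = (\<Inter>i\<in>{..<n}. A i)" unfolding A_def by auto
      have ind: "indep_vars (\<lambda>_. borel) Inc {..<n}"
      proof -
        have "\<forall>i<n. 0 \<le> ts i \<and> ts i < ts (Suc i)" unfolding ts_def using \<Delta>pos
          by (auto simp: field_simps)
        hence "indep_vars (\<lambda>_. borel) (\<lambda>i \<omega>. W (ts (Suc i)) \<omega> - W (ts i) \<omega>) {..<n}"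
          using BM unfolding brownian_motion_def by blast
        thus ?thesis unfolding Inc_def .
      qed
      have "prob (\<Inter>i\<in>{..<n}. A i) = (\<Prod>i\<in>{..<n}. prob (A i))"
        unfolding A_def using False
        by (intro indep_varsD_finite[OF ind]) auto
      also have "\<dots> \<le> (\<Prod>i\<in>{..<n}. (1 - p0))"
        by (intro prod_mono) (auto simp: Aprob)
      finally show ?thesis using eq by simp
    qed
    define I where "I = integral {0..t} (\<lambda>s. - Vxx (xhat \<epsilon> s) s)"
    have bnd: "- Vxx (xhat \<epsilon> s) s \<le> Mxx" for s using Mb[of "xhat \<epsilon> s" s] by linarith
    have Ile: "I \<le> Mxx * t"
    proof (cases "(\<lambda>s. - Vxx (xhat \<epsilon> s) s) integrable_on {0..t}")
      case True
      have "I \<le> integral {0..t} (\<lambda>s. Mxx)" unfolding I_def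
        using True by (intro integral_le) (auto simp: bnd)
      also have "\<dots> = Mxx * t" using t by simp
      finally show ?thesis .
    next
      case False
      have "I = 0" unfolding I_def by (rule not_integrable_integral[OF False])
      thus ?thesis using Mpos t by simp
    qed
    have "(1 - p0) ^ n \<le> exp (- p0) ^ n"
      using p0le by (intro power_mono) (auto simp: exp_ge_add_one_self[of "- p0", simplified])
    also have "\<dots> = exp (- p0 * real n)" by (simp add: exp_of_nat_mult[symmetric] mult.commute)
    also have "\<dots> \<le> exp (1 + - (\<kappa> / h\<^sup>2) * (1/\<epsilon>) * I)"
    proof -
      have "- p0 * real n \<le> - p0 * (t / \<Delta> - 1)" using ngt p0pos by simp
      also have "\<dots> \<le> 1 - p0 * (t / \<Delta>)" using p0le by (simp add: algebra_simps)
      also have "p0 * (t / \<Delta>) \<ge> (\<kappa> / h\<^sup>2) * (1/\<epsilon>) * I"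
      proof -
        have "(\<kappa> / h\<^sup>2) * (1/\<epsilon>) * I \<le> (\<kappa> / h\<^sup>2) * (1/\<epsilon>) * (Mxx * t)"
          using Ile p0pos Mpos eps h unfolding \<kappa>_def by (intro mult_left_mono) auto
        also have "\<dots> = p0 * (t / \<Delta>)" unfolding \<kappa>_def \<Delta>_def using Mpos eps h by (simp add: field_simps)
        finally show ?thesis .
      qed
      hence "1 - p0 * (t / \<Delta>) \<le> 1 + - (\<kappa> / h\<^sup>2) * (1/\<epsilon>) * I" by simp
      finally show ?thesis by simp
    qed
    also have "\<dots> = exp 1 * exp (- (\<kappa> / h\<^sup>2) * (1/\<epsilon>) * I)" by (simp only: exp_add)
    finally have fin: "(1 - p0) ^ n \<le> exp 1 * exp (- (\<kappa> / h\<^sup>2) * (1/\<epsilon>) * I)" .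
    have "measure M (not_exited_by M X (strip_B (xhat \<epsilon>) (\<lambda>s. - Vxx (xhat \<epsilon> s) s) g \<sigma> h) t)
          \<le> prob (space M \<inter> (\<Inter>i\<in>{..<n}. A i))"
      by (rule finite_measure_mono[OF incl S_meas])
    thus ?thesis using S_prob fin unfolding I_def by linarith
  qed
  show ?thesis
    apply (rule exI[of _ L], rule exI[of _ "exp 1"], rule exI[of _ \<kappa>], rule exI[of _ \<epsilon>0], rule exI[of _ 1])
    using G1pos p0pos Mpos \<epsilon>0_pos main unfolding L_def \<kappa>_def by auto
qed

end
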